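(* Let $T$ be the BFS tree produced by temporal BFS on a temporal graph $G=(V,E)$ from source $s$ with starting time $t_s$. For every vertex $v\in V$, any two distinct occurrences of $v$ in $T$ have distinct levels.
   Context: A temporal graph is a pair $G=(V,E)$ where $V$ is a finite set of vertices and $E$ is a finite set of temporal edges, i.e. triples $(u,v,t)$ with $u,v\in V$, $u\neq v$, $t\in\mathbb{R}$ (the time at which the edge is active); distinct elements of $E$ are distinct triples. Fix $t_s\in\mathbb{R}$ and $s\in V$. Temporal BFS. Records are tuples $(x,d,\tau,p)$ (vertex $x$, level $d$, time $\tau$, predecessor record $p$ or none); every record ever created is an occurrence (node) of the BFS tree $T$, rooted at the initial record, with a tree edge from the predecessor record to the record; the level and time of an occurrence are the final values of its fields. For each $x\in V$ a current value $\sigma(x)$ is kept, initially $\infty$, and set to $\tau$ whenever a record of $x$ is created or its time is updated to $\tau$. Initially the FIFO queue $Q$ contains only $(s,0,t_s,\text{none})$ and $\sigma(s)=t_s$; no edge is traversed. While $Q\neq\emptyset$: pop the front record $R=(u,d_u,\sigma_u,p_u)$; let $B$ be the set of edges $(u,v,t)\in E$ not yet traversed with $\sigma_u\le t$; for each vertex $v$ such that $B$ contains an edge to $v$ (in any order), let $e=(u,v,t)$ be the edge of $B$ to $v$ with smallest $t$, mark $e$ traversed, and: (i) if $Q$ contains no record of $v$ and $\sigma(v)>t$, create $(v,d_u+1,t,R)$ and append it to $Q$; (ii) if $Q$ contains a record of $v$ with level $d_u+1$ and $\sigma(v)>t$, set that record's time to $t$ and predecessor to $R$; (iii) if $Q$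 contains a record of $v$ but none with level $d_u+1$, and $\sigma(v)>t$, create $(v,d_u+1,t,R)$ and append it to $Q$. *)

theory Defs
  imports Main "HOL-Library.Extended_Real"
begin

text \<open>Records are identified by their creation index (position in the list of all records ever
  created); the predecessor field stores the index of the predecessor record.\<close>

type_synonym 'v tedge = "'v \<times> 'v \<times> real"

record 'v trec =
  rv    :: 'v
  rlev  :: nat
  rtime :: real
  rpred :: "nat option"

text \<open>State of the temporal BFS.
  recs  : all records ever created (the nodes of the BFS tree T, with current field values);
  queue : the FIFO queue Q (indices into recs);
  sig   : the current value sigma(x), infinity initially;
  trav  : the set of traversed edges;
  cur   : during the processing of a popped record R: Some (R, W, B) where B is the edge set
          computed at the pop and W the set of target vertices still to be processed.\<close>

record 'v bfs_state =
  recs  :: "'v trec list"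
  queue :: "nat list"
  sig   :: "'v \<Rightarrow> ereal"
  trav  :: "'v tedge set"
  cur   :: "(nat \<times> 'v set \<times> 'v tedge set) option"

definition bfs_init :: "'v \<Rightarrow> real \<Rightarrow> 'v bfs_state" where
  "bfs_init s ts = \<lparr> recs = [\<lparr> rv = s, rlev = 0, rtime = ts, rpred = None \<rparr>],
                    queue = [0], sig = (\<lambda>_. \<infinity>)(s := ereal ts), trav = {}, cur = None \<rparr>"

text \<open>Small steps of the temporal BFS. The order in which the target vertices of B are
  processed is arbitrary (nondeterministic).\<close>

inductive bfs_step :: "'v tedge set \<Rightarrow> 'v bfs_state \<Rightarrow> 'v bfs_state \<Rightarrow> bool" for E where
  pop: "\<lbrakk> cur S = None; queue S = r # q;
          B = {(u, v, t) \<in> E. (u, v, t) \<notin> trav S \<and> u = rv (recs S ! r) \<and> rtime (recs S ! r) \<le> t} \<rbrakk>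
        \<Longrightarrow> bfs_step E S (S\<lparr> queue := q, cur := Some (r, {v. \<exists>u t. (u, v, t) \<in> B}, B) \<rparr>)"
| finish: "cur S = Some (r, {}, B) \<Longrightarrow> bfs_step E S (S\<lparr> cur := None \<rparr>)"
| create: "\<lbrakk> cur S = Some (r, W, B); v \<in> W; (u, v, t) \<in> B;
             \<forall>u' t'. (u', v, t') \<in> B \<longrightarrow> t \<le> t';
             (\<not> (\<exists>i \<in> set (queue S). rv (recs S ! i) = v))
               \<or> ((\<exists>i \<in> set (queue S). rv (recs S ! i) = v)
                   \<and> \<not> (\<exists>i \<in> set (queue S). rv (recs S ! i) = v \<and> rlev (recs S ! i) = rlev (recs S ! r) + 1));
             sig S v > ereal t \<rbrakk>
        \<Longrightarrow> bfs_step E S (S\<lparr> recs := recs S @ [\<lparr> rv = v, rlev = rlev (recs S ! r) + 1, rtime = t, rpred = Some r \<rparr>],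
                            queue := queue S @ [length (recs S)],
                            sig := (sig S)(v := ereal t),
                            trav := insert (u, v, t) (trav S),
                            cur := Some (r, W - {v}, B) \<rparr>)"
| update: "\<lbrakk> cur S = Some (r, W, B); v \<in> W; (u, v, t) \<in> B;
             \<forall>u' t'. (u', v, t') \<in> B \<longrightarrow> t \<le> t';
             i \<in> set (queue S); rv (recs S ! i) = v; rlev (recs S ! i) = rlev (recs S ! r) + 1;
             sig S v > ereal t \<rbrakk>
        \<Longrightarrow> bfs_step E S (S\<lparr> recs := (recs S)[i := (recs S ! i)\<lparr> rtime := t, rpred := Some r \<rparr>],
                            sig := (sig S)(v := ereal t),
                            trav := insert (u, v, t) (trav S),
                            cur := Some (r, W - {v}, B) \<rparr>)"
| skip: "\<lbrakk> cur S = Some (r, W, B); v \<in> W; (u, v, t) \<in> B;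
           \<forall>u' t'. (u', v, t') \<in> B \<longrightarrow> t \<le> t';
           \<not> (sig S v > ereal t) \<rbrakk>
        \<Longrightarrow> bfs_step E S (S\<lparr> trav := insert (u, v, t) (trav S), cur := Some (r, W - {v}, B) \<rparr>)"

end

theory Submission
  imports Defs
begin

definition inv :: "'v bfs_state \<Rightarrow> bool" where
  "inv S \<longleftrightarrow>
     (\<forall>k\<in>set (queue S). k < length (recs S)) \<and> distinct (queue S) \<and>
     sorted (map (\<lambda>k. rlev (recs S ! k)) (queue S)) \<and>
     (\<forall>k<length (recs S). k \<notin> set (queue S) \<longrightarrow> (\<forall>q\<in>set (queue S). rlev (recs S ! k) \<le> rlev (recs S ! q))) \<and>
     (\<forall>a\<in>set (queue S). \<forall>b\<in>set (queue S). rlev (recs S ! a) \<le> rlev (recs S ! b) + 1) \<and>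
     (\<forall>r W B. cur S = Some (r, W, B) \<longrightarrow> r < length (recs S) \<and> r \<notin> set (queue S) \<and>
        (\<forall>q\<in>set (queue S). rlev (recs S ! q) \<le> rlev (recs S ! r) + 1) \<and>
        (\<forall>k<length (recs S). k \<notin> set (queue S) \<longrightarrow> rlev (recs S ! k) \<le> rlev (recs S ! r))) \<and>
     (\<forall>i<length (recs S). \<forall>j<length (recs S). i \<noteq> j \<longrightarrow> rv (recs S ! i) = rv (recs S ! j)
        \<longrightarrow> rlev (recs S ! i) \<noteq> rlev (recs S ! j))"

lemma inv_init: "inv (bfs_init s ts)"
  by (simp add: inv_def bfs_init_def)

lemma upd_rv: "k < length xs \<Longrightarrow> rv ((xs[i := (xs!i)\<lparr>rtime := t, rpred := p\<rparr>]) ! k) = rv (xs ! k)"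
  by (cases "k = i") auto

lemma upd_rlev: "k < length xs \<Longrightarrow> rlev ((xs[i := (xs!i)\<lparr>rtime := t, rpred := p\<rparr>]) ! k) = rlev (xs ! k)"
  by (cases "k = i") auto

lemma inv_step:
  assumes "bfs_step E S S'" "inv S"
  shows "inv S'"
  using assms
proof (induction rule: bfs_step.induct)
  case (pop S r q B)
  from pop.prems have qb: "\<forall>k\<in>set (r # q). k < length (recs S)" and di: "distinct (r # q)"
    and so: "sorted (map (\<lambda>k. rlev (recs S ! k)) (r # q))"
    and dd: "\<forall>k<length (recs S). k \<notin> set (r # q) \<longrightarrow> (\<forall>p\<in>set (r # q). rlev (recs S ! k) \<le> rlev (recs S ! p))"
    and sp: "\<forall>a\<in>set (r # q). \<forall>b\<in>set (r # q). rlev (recs S ! a) \<le> rlev (recs S ! b) + 1"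
    and un: "\<forall>i<length (recs S). \<forall>j<length (recs S). i \<noteq> j \<longrightarrow> rv (recs S ! i) = rv (recs S ! j) \<longrightarrow> rlev (recs S ! i) \<noteq> rlev (recs S ! j)"
    using pop.hyps(2) by (simp_all add: inv_def)
  have hq: "\<forall>p\<in>set q. rlev (recs S ! r) \<le> rlev (recs S ! p)" using so by simp
  have so': "sorted (map (\<lambda>k. rlev (recs S ! k)) q)" using so by simp
  have dd': "\<forall>k<length (recs S). k \<notin> set q \<longrightarrow> (\<forall>p\<in>set q. rlev (recs S ! k) \<le> rlev (recs S ! p))"
  proof (intro allI impI ballI)
    fix k p assume "k < length (recs S)" "k \<notin> set q" "p \<in> set q"
    then show "rlev (recs S ! k) \<le> rlev (recs S ! p)"
      using dd hq by (cases "k = r") auto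
  qed
  have c: "\<forall>k<length (recs S). k \<notin> set q \<longrightarrow> rlev (recs S ! k) \<le> rlev (recs S ! r)"
  proof (intro allI impI)
    fix k assume "k < length (recs S)" "k \<notin> set q"
    then show "rlev (recs S ! k) \<le> rlev (recs S ! r)"
      using dd by (cases "k = r") auto
  qed
  have gen: "\<And>S'. recs S' = recs S \<Longrightarrow> queue S' = q \<Longrightarrow> cur S' = Some (r, {v. \<exists>u t. (u, v, t) \<in> B}, B) \<Longrightarrow> inv S'"
  proof -
    fix S' :: "'a bfs_state" assume e: "recs S' = recs S" "queue S' = q" "cur S' = Some (r, {v. \<exists>u t. (u, v, t) \<in> B}, B)"
    have rn: "r < length (recs S)" "r \<notin> set q" using qb di by auto
    have sp': "\<forall>a\<in>set q. \<forall>b\<in>set q. rlev (recs S ! a) \<le> rlev (recs S ! b) + 1" using sp by simp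
    have ql: "\<forall>p\<in>set q. rlev (recs S ! p) \<le> rlev (recs S ! r) + 1" using sp by simp
    have qb': "\<forall>k\<in>set q. k < length (recs S)" "distinct q" using qb di by auto
    have cu: "\<forall>r' W' B'. Some (r, {v. \<exists>u t. (u, v, t) \<in> B}, B) = Some (r', W', B') \<longrightarrow>
        r' < length (recs S) \<and> r' \<notin> set q \<and>
        (\<forall>p\<in>set q. rlev (recs S ! p) \<le> rlev (recs S ! r') + 1) \<and>
        (\<forall>k<length (recs S). k \<notin> set q \<longrightarrow> rlev (recs S ! k) \<le> rlev (recs S ! r'))"
    proof (intro allI impI)
      fix r' W' B' assume "Some (r, {v. \<exists>u t. (u, v, t) \<in> B}, B) = Some (r', W', B')"
      then have "r' = r" by simp
      then show "r' < length (recs S) \<and> r' \<notin> set q \<and>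
        (\<forall>p\<in>set q. rlev (recs S ! p) \<le> rlev (recs S ! r') + 1) \<and>
        (\<forall>k<length (recs S). k \<notin> set q \<longrightarrow> rlev (recs S ! k) \<le> rlev (recs S ! r'))"
        using rn ql c by simp
    qed
    show "inv S'" unfolding inv_def e
      using qb' so' dd' sp' un cu by (intro conjI)
  qed
  show ?case by (rule gen) simp_all
next
  case (finish S r B)
  then show ?case by (simp add: inv_def)
next
  case (create S r W B v u t)
  let ?n = "length (recs S)"
  let ?d = "rlev (recs S ! r) + 1"
  have I: "inv S" by fact
  have c: "cur S = Some (r, W, B)" by fact
  from I c have rl: "r < ?n" "r \<notin> set (queue S)"
    and qle: "\<forall>q\<in>set (queue S). rlev (recs S ! q) \<le> ?d"
    and pop: "\<forall>k<?n. k \<notin> set (queue S) \<longrightarrow> rlev (recs S ! k) \<le> rlev (recs S ! r)"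
    by (simp_all add: inv_def)
  from I have qb: "\<forall>k\<in>set (queue S). k < ?n" and di: "distinct (queue S)"
    and so: "sorted (map (\<lambda>k. rlev (recs S ! k)) (queue S))"
    and dd: "\<forall>k<?n. k \<notin> set (queue S) \<longrightarrow> (\<forall>q\<in>set (queue S). rlev (recs S ! k) \<le> rlev (recs S ! q))"
    and sp: "\<forall>a\<in>set (queue S). \<forall>b\<in>set (queue S). rlev (recs S ! a) \<le> rlev (recs S ! b) + 1"
    and un: "\<forall>i<?n. \<forall>j<?n. i \<noteq> j \<longrightarrow> rv (recs S ! i) = rv (recs S ! j) \<longrightarrow> rlev (recs S ! i) \<noteq> rlev (recs S ! j)"
    by (simp_all add: inv_def)
  have rq: "\<forall>q\<in>set (queue S). rlev (recs S ! r) \<le> rlev (recs S ! q)" using dd rl by auto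
  have new: "\<forall>k<?n. rv (recs S ! k) = v \<longrightarrow> rlev (recs S ! k) \<noteq> ?d"
  proof (intro allI impI)
    fix k assume k: "k < ?n" "rv (recs S ! k) = v"
    show "rlev (recs S ! k) \<noteq> ?d"
    proof (cases "k \<in> set (queue S)")
      case True then show ?thesis using create.hyps(5) k by auto
    next
      case False then show ?thesis using pop k by fastforce
    qed
  qed
  let ?R = "recs S @ [\<lparr>rv = v, rlev = ?d, rtime = t, rpred = Some r\<rparr>]"
  have nth_old: "\<And>k. k < ?n \<Longrightarrow> ?R ! k = recs S ! k" by (simp add: nth_append)
  have nth_new: "?R ! ?n = \<lparr>rv = v, rlev = ?d, rtime = t, rpred = Some r\<rparr>" by simp
  have mapeq: "map (\<lambda>k. rlev (?R ! k)) (queue S) = map (\<lambda>k. rlev (recs S ! k)) (queue S)"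
    using qb nth_old by auto
  have gen: "\<And>S'. recs S' = ?R \<Longrightarrow> queue S' = queue S @ [?n] \<Longrightarrow> cur S' = Some (r, W - {v}, B) \<Longrightarrow> inv S'"
  proof -
  fix S' :: "'a bfs_state" assume e: "recs S' = ?R" "queue S' = queue S @ [?n]" "cur S' = Some (r, W - {v}, B)"
  show "inv S'"
    unfolding inv_def e
  proof (intro conjI)
    show "\<forall>k\<in>set (queue S @ [?n]). k < length ?R" using qb by auto
    show "distinct (queue S @ [?n])" using qb di by auto
    show "sorted (map (\<lambda>k. rlev (?R ! k)) (queue S @ [?n]))"
      unfolding map_append mapeq using so qle qb by (auto simp: sorted_append)
    show "\<forall>k<length ?R. k \<notin> set (queue S @ [?n]) \<longrightarrow> (\<forall>q\<in>set (queue S @ [?n]). rlev (?R ! k) \<le> rlev (?R ! q))"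
    proof (intro allI impI ballI)
      fix k q assume k: "k < length ?R" "k \<notin> set (queue S @ [?n])" and q: "q \<in> set (queue S @ [?n])"
      have kn: "k < ?n" using k by auto
      show "rlev (?R ! k) \<le> rlev (?R ! q)"
        using q kn k dd pop qb nth_old by (auto simp: nth_old)
    qed
    show "\<forall>a\<in>set (queue S @ [?n]). \<forall>b\<in>set (queue S @ [?n]). rlev (?R ! a) \<le> rlev (?R ! b) + 1"
      using sp qle rq qb nth_old by fastforce
    show "\<forall>r' W' B'. Some (r, W - {v}, B) = Some (r', W', B') \<longrightarrow> r' < length ?R \<and> r' \<notin> set (queue S @ [?n]) \<and>
        (\<forall>q\<in>set (queue S @ [?n]). rlev (?R ! q) \<le> rlev (?R ! r') + 1) \<and>
        (\<forall>k<length ?R. k \<notin> set (queue S @ [?n]) \<longrightarrow> rlev (?R ! k) \<le> rlev (?R ! r'))"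
    proof (intro allI impI)
      fix r' W' B' assume "Some (r, W - {v}, B) = Some (r', W', B')"
      then have [simp]: "r' = r" by simp
      show "r' < length ?R \<and> r' \<notin> set (queue S @ [?n]) \<and>
        (\<forall>q\<in>set (queue S @ [?n]). rlev (?R ! q) \<le> rlev (?R ! r') + 1) \<and>
        (\<forall>k<length ?R. k \<notin> set (queue S @ [?n]) \<longrightarrow> rlev (?R ! k) \<le> rlev (?R ! r'))"
      proof (intro conjI)
        show "r' < length ?R" using rl by simp
        show "r' \<notin> set (queue S @ [?n])" using rl by simp
        show "\<forall>q\<in>set (queue S @ [?n]). rlev (?R ! q) \<le> rlev (?R ! r') + 1"
          using qle qb nth_old rl by auto
        show "\<forall>k<length ?R. k \<notin> set (queue S @ [?n]) \<longrightarrow> rlev (?R ! k) \<le> rlev (?R ! r')"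
        proof (intro allI impI)
          fix k assume "k < length ?R" "k \<notin> set (queue S @ [?n])"
          then have "k < ?n" "k \<notin> set (queue S)" by auto
          then show "rlev (?R ! k) \<le> rlev (?R ! r')" using pop nth_old rl by simp
        qed
      qed
    qed
    show "\<forall>i<length ?R. \<forall>j<length ?R. i \<noteq> j \<longrightarrow> rv (?R ! i) = rv (?R ! j) \<longrightarrow> rlev (?R ! i) \<noteq> rlev (?R ! j)"
    proof (intro allI impI)
      fix i j assume ij: "i < length ?R" "j < length ?R" "i \<noteq> j" "rv (?R ! i) = rv (?R ! j)"
      show "rlev (?R ! i) \<noteq> rlev (?R ! j)"
      proof (cases "i = ?n")
        case True
        then have "j < ?n" using ij by auto
        then show ?thesis using True ij new nth_old by (metis nth_new trec.select_convs(1,2))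
      next
        case False
        then have i: "i < ?n" using ij by auto
        show ?thesis
        proof (cases "j = ?n")
          case True
          then show ?thesis using i ij new nth_old by (metis nth_new trec.select_convs(1,2))
        next
          case False
          then have "j < ?n" using ij by auto
          then show ?thesis using i ij un nth_old by metis
        qed
      qed
    qed
  qed
  qed
  show ?case by (rule gen) simp_all
next
  case (update S r W B v u t i)
  let ?R = "(recs S)[i := (recs S ! i)\<lparr>rtime := t, rpred := Some r\<rparr>]"
  have L: "length ?R = length (recs S)" by simp
  have A: "\<And>k. k < length (recs S) \<Longrightarrow> rlev (?R ! k) = rlev (recs S ! k)" by (rule upd_rlev)
  have B: "\<And>k. k < length (recs S) \<Longrightarrow> rv (?R ! k) = rv (recs S ! k)" by (rule upd_rv)
  from update.prems update.hyps(1) have r: "r < length (recs S)" by (auto simp: inv_def)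
  from update.prems have qb: "\<forall>k\<in>set (queue S). k < length (recs S)" by (simp add: inv_def)
  have M: "map (\<lambda>k. rlev (?R ! k)) (queue S) = map (\<lambda>k. rlev (recs S ! k)) (queue S)"
    using qb A by auto
  from update.prems have di: "distinct (queue S)"
    and so: "sorted (map (\<lambda>k. rlev (recs S ! k)) (queue S))"
    and dd: "\<forall>k<length (recs S). k \<notin> set (queue S) \<longrightarrow> (\<forall>q\<in>set (queue S). rlev (recs S ! k) \<le> rlev (recs S ! q))"
    and sp: "\<forall>a\<in>set (queue S). \<forall>b\<in>set (queue S). rlev (recs S ! a) \<le> rlev (recs S ! b) + 1"
    and un: "\<forall>i<length (recs S). \<forall>j<length (recs S). i \<noteq> j \<longrightarrow> rv (recs S ! i) = rv (recs S ! j) \<longrightarrow> rlev (recs S ! i) \<noteq> rlev (recs S ! j)"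
    by (simp_all add: inv_def)
  from update.prems update.hyps(1) have
    cu: "r \<notin> set (queue S) \<and> (\<forall>q\<in>set (queue S). rlev (recs S ! q) \<le> rlev (recs S ! r) + 1) \<and>
        (\<forall>k<length (recs S). k \<notin> set (queue S) \<longrightarrow> rlev (recs S ! k) \<le> rlev (recs S ! r))"
    by (simp add: inv_def)
  have gen: "\<And>S'. recs S' = ?R \<Longrightarrow> queue S' = queue S \<Longrightarrow> cur S' = Some (r, W - {v}, B) \<Longrightarrow> inv S'"
  proof -
    fix S' :: "'a bfs_state" assume e: "recs S' = ?R" "queue S' = queue S" "cur S' = Some (r, W - {v}, B)"
    have so': "sorted (map (\<lambda>k. rlev (?R ! k)) (queue S))" unfolding M by (rule so)
    have dd': "\<forall>k<length ?R. k \<notin> set (queue S) \<longrightarrow> (\<forall>q\<in>set (queue S). rlev (?R ! k) \<le> rlev (?R ! q))"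
      using dd A qb by simp
    have sp': "\<forall>a\<in>set (queue S). \<forall>b\<in>set (queue S). rlev (?R ! a) \<le> rlev (?R ! b) + 1"
      using sp A qb by simp
    have un': "\<forall>i<length ?R. \<forall>j<length ?R. i \<noteq> j \<longrightarrow> rv (?R ! i) = rv (?R ! j) \<longrightarrow> rlev (?R ! i) \<noteq> rlev (?R ! j)"
      using un A B by simp
    have cu': "\<forall>r' W' B'. Some (r, W - {v}, B) = Some (r', W', B') \<longrightarrow> r' < length ?R \<and> r' \<notin> set (queue S) \<and>
        (\<forall>q\<in>set (queue S). rlev (?R ! q) \<le> rlev (?R ! r') + 1) \<and>
        (\<forall>k<length ?R. k \<notin> set (queue S) \<longrightarrow> rlev (?R ! k) \<le> rlev (?R ! r'))"
    proof (intro allI impI)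
      fix r' W' B' assume "Some (r, W - {v}, B) = Some (r', W', B')"
      then have "r' = r" by simp
      then show "r' < length ?R \<and> r' \<notin> set (queue S) \<and>
        (\<forall>q\<in>set (queue S). rlev (?R ! q) \<le> rlev (?R ! r') + 1) \<and>
        (\<forall>k<length ?R. k \<notin> set (queue S) \<longrightarrow> rlev (?R ! k) \<le> rlev (?R ! r'))"
        using cu r A qb by simp
    qed
    have qb': "\<forall>k\<in>set (queue S). k < length ?R" using qb by simp
    show "inv S'" unfolding inv_def e
      using qb' di so' dd' sp' un' cu' by (intro conjI)
  qed
  show ?case by (rule gen) simp_all
next
  case (skip S r W B v u t)
  then show ?case by (simp add: inv_def)
qed

lemma inv_steps: "(bfs_step E)\<^sup>*\<^sup>* S S' \<Longrightarrow> inv S \<Longrightarrow> inv S'"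
  by (induction rule: rtranclp_induct) (auto intro: inv_step)

theorem lemma10:
  fixes V :: "'v set" and E :: "'v tedge set" and s :: 'v and ts :: real
    and S :: "'v bfs_state"
  assumes "finite V" and "finite E"
    and "\<forall>(u, v, t) \<in> E. u \<in> V \<and> v \<in> V \<and> u \<noteq> v"
    and "s \<in> V"
    and "(bfs_step E)\<^sup>*\<^sup>* (bfs_init s ts) S"
    and "queue S = []" and "cur S = None"
    and "i < length (recs S)" and "j < length (recs S)" and "i \<noteq> j"
    and "rv (recs S ! i) = rv (recs S ! j)"
  shows "rlev (recs S ! i) \<noteq> rlev (recs S ! j)"
proof -
  have "inv S" using inv_steps[OF assms(5) inv_init] .
  then show ?thesis using assms(8-11) unfolding inv_def by blast
qed

end
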